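(* Let $(\Lambda,\ell)$ be a critical map, $U$ a simply connected region with flat chart $Z:U\to\mathbb{C}$, and $z_0\in\Lambda_0$ a base vertex. For every discrete holomorphic function $f$ on $\Lambda$ in $U$, one has $df=f'\,dZ$, that is, for every edge $(x,y)$ of the diamond $\Diamond$ in $U$, $f(y)-f(x)=\frac{f'(x)+f'(y)}{2}\,(Z(y)-Z(x))$.
   Context: $\Lambda=\Gamma\sqcup\Gamma^*$ is a cellular decomposition and its Poincaré dual; the diamond $\Diamond$ has vertices $\Lambda_0$ and faces the quadrilaterals $(x,y,x',y')$ for each edge $(x,x')\in\Gamma_1$ with dual $(y,y')$; its edges join $x\in\Gamma_0$ to $y\in\Gamma^*_0$. The map is critical: with respect to a flat metric with conic singularities, each face of $\Diamond$ is realized as a Euclidean rhombus of common side length $\delta$, with diagonals the dual edges, orthogonal, forming a direct basis, and $\rho(e)=\ell(e^* )/\ell(e)$. The flat chart $Z$ is an orientation-preserving isometric coordinate on $U$ (no conic singularities inside), giving positions $Z(v)$ of the vertices. $f$ is discrete holomorphic if $f(y')-f(y)=i\rho(x,x')(f(x')-f(x))$ for dual edges $(x,x'),(y,y')$. For a function $g$ on $\Lambda_0$, the 1-form $g\cdot dZ$ on $\Diamond$ is $\int_{(u,v)}g\cdot dZ=\frac{g(u)+g(v)}{2}(Z(v)-Z(u))$. Set $\varepsilon=+1$ on $\Gamma_0$, $-1$ on $\Gamma^*_0$, $f^\dagger:=\varepsilon\bar f$, and $f'(z):=\frac{4}{\delta^2}\bigl(\int_{z_0}^z f^\dagger\,dZ\bigr)^\dagger$,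 where the integral is taken along any path in $\Diamond$ from $z_0$ to $z$ (for holomorphic $f$ it is path independent, and $f^\dagger$, $f'$ are holomorphic). *)

theory Defs
  imports Complex_Main
begin

text \<open>Faces of the diamond in U are quadruples (x, y, x', y') with x, x' primal
  vertices (in the set B = Gamma_0), y, y' dual vertices (not in B), the
  primal edge (x,x') having dual edge (y,y').\<close>

type_synonym 'v face = "'v \<times> 'v \<times> 'v \<times> 'v"

definition face_verts :: "'v face \<Rightarrow> 'v list" where
  "face_verts \<phi> = (case \<phi> of (x, y, x', y') \<Rightarrow> [x, y, x', y'])"

definition diamond_vertices :: "'v face set \<Rightarrow> 'v set" where
  "diamond_vertices F = (\<Union>\<phi>\<in>F. set (face_verts \<phi>))"

definition diamond_edges :: "'v face set \<Rightarrow> ('v \<times> 'v) set" where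
  "diamond_edges F = {(u, v). \<exists>x y x' y'. (x, y, x', y') \<in> F \<and>
      ({u, v} = {x, y} \<or> {u, v} = {y, x'} \<or> {u, v} = {x', y'} \<or> {u, v} = {y', x})}"

definition is_walk :: "('v \<times> 'v) set \<Rightarrow> 'v list \<Rightarrow> bool" where
  "is_walk E w \<longleftrightarrow> w \<noteq> [] \<and> (\<forall>i < length w - 1. (w ! i, w ! Suc i) \<in> E)"

definition face_loops :: "'v face set \<Rightarrow> 'v list set" where
  "face_loops F = {c. \<exists>\<phi>\<in>F. \<exists>k<4.
      (let r = rotate k (face_verts \<phi>) in c = r @ [hd r] \<or> c = rev (r @ [hd r]))}"

inductive walk_move :: "('v \<times> 'v) set \<Rightarrow> 'v list set \<Rightarrow> 'v list \<Rightarrow> 'v list \<Rightarrow> bool"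
  for E L where
  backtrack: "(u, v) \<in> E \<Longrightarrow> walk_move E L (xs @ u # ys) (xs @ u # v # u # ys)"
| face_loop: "c \<in> L \<Longrightarrow> walk_move E L (xs @ hd c # ys) (xs @ c @ ys)"

definition walk_homotopic :: "'v face set \<Rightarrow> 'v list \<Rightarrow> 'v list \<Rightarrow> bool" where
  "walk_homotopic F = (\<lambda>a b. walk_move (diamond_edges F) (face_loops F) a b
                            \<or> walk_move (diamond_edges F) (face_loops F) b a)\<^sup>*\<^sup>*"

definition simply_connected_region :: "'v face set \<Rightarrow> bool" where
  "simply_connected_region F \<longleftrightarrow> F \<noteq> {} \<and>
     (\<forall>u\<in>diamond_vertices F. \<forall>v\<in>diamond_vertices F.
        \<exists>w. is_walk (diamond_edges F) w \<and> hd w = u \<and> last w = v) \<and>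
     (\<forall>w. is_walk (diamond_edges F) w \<and> hd w = last w \<longrightarrow> walk_homotopic F w [hd w])"

text \<open>Criticality in the flat chart: every face is a Euclidean rhombus of side
  delta whose diagonals (x,x') and (y,y') are orthogonal and form a direct basis.\<close>
definition critical_region :: "'v set \<Rightarrow> 'v face set \<Rightarrow> ('v \<Rightarrow> complex) \<Rightarrow> real \<Rightarrow> bool" where
  "critical_region B F Z \<delta> \<longleftrightarrow> \<delta> > 0 \<and>
     (\<forall>(x, y, x', y') \<in> F. x \<in> B \<and> x' \<in> B \<and> y \<notin> B \<and> y' \<notin> B \<and>
        cmod (Z y - Z x) = \<delta> \<and> cmod (Z x' - Z y) = \<delta> \<and>
        cmod (Z y' - Z x') = \<delta> \<and> cmod (Z x - Z y') = \<delta> \<and>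
        Z x' \<noteq> Z x \<and> (\<exists>t>0. Z y' - Z y = \<i> * complex_of_real t * (Z x' - Z x)))"

definition face_rho :: "('v \<Rightarrow> complex) \<Rightarrow> 'v face \<Rightarrow> real" where
  "face_rho Z \<phi> = (case \<phi> of (x, y, x', y') \<Rightarrow> cmod (Z y' - Z y) / cmod (Z x' - Z x))"

definition discrete_holomorphic :: "'v face set \<Rightarrow> ('v \<Rightarrow> complex) \<Rightarrow> ('v \<Rightarrow> complex) \<Rightarrow> bool" where
  "discrete_holomorphic F Z f \<longleftrightarrow>
     (\<forall>(x, y, x', y') \<in> F.
        f y' - f y = \<i> * complex_of_real (face_rho Z (x, y, x', y')) * (f x' - f x))"

definition eps :: "'v set \<Rightarrow> 'v \<Rightarrow> complex" where
  "eps B v = (if v \<in> B then 1 else -1)"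

definition dagger :: "'v set \<Rightarrow> ('v \<Rightarrow> complex) \<Rightarrow> 'v \<Rightarrow> complex" where
  "dagger B f v = eps B v * cnj (f v)"

definition walk_integral :: "('v \<Rightarrow> complex) \<Rightarrow> ('v \<Rightarrow> complex) \<Rightarrow> 'v list \<Rightarrow> complex" where
  "walk_integral Z g w =
     (\<Sum>i < length w - 1. (g (w ! i) + g (w ! Suc i)) / 2 * (Z (w ! Suc i) - Z (w ! i)))"

definition dderiv :: "'v set \<Rightarrow> 'v face set \<Rightarrow> ('v \<Rightarrow> complex) \<Rightarrow> real \<Rightarrow> 'v
                       \<Rightarrow> ('v \<Rightarrow> complex) \<Rightarrow> 'v \<Rightarrow> complex" where
  "dderiv B F Z \<delta> z0 f =
     (\<lambda>z. complex_of_real (4 / \<delta>\<^sup>2) *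
        dagger B (\<lambda>z'. walk_integral Z (dagger B f)
           (SOME w. is_walk (diamond_edges F) w \<and> hd w = z0 \<and> last w = z')) z)"

end

theory Submission
  imports Defs
begin

fun wi :: "('v \<Rightarrow> complex) \<Rightarrow> ('v \<Rightarrow> complex) \<Rightarrow> 'v list \<Rightarrow> complex" where
  "wi Z g [] = 0"
| "wi Z g [a] = 0"
| "wi Z g (a # b # r) = (g a + g b) / 2 * (Z b - Z a) + wi Z g (b # r)"

lemma wi_eq: "walk_integral Z g w = wi Z g w"
proof (induction Z g w rule: wi.induct)
  case (3 Z g a b r)
  have "walk_integral Z g (a # b # r) =
      (g a + g b) / 2 * (Z b - Z a) + walk_integral Z g (b # r)"
  proof -
    have l: "length (a # b # r) - 1 = Suc (length (b # r) - 1)" by simp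
    show ?thesis unfolding walk_integral_def l
      by (subst sum.lessThan_Suc_shift) simp
  qed
  then show ?case using 3 by simp
qed (auto simp: walk_integral_def)

lemma wi_split: "wi Z g (xs @ a # ys) = wi Z g (xs @ [a]) + wi Z g (a # ys)"
proof (induction xs)
  case Nil then show ?case by simp
next
  case (Cons x xs)
  then show ?case by (cases xs) auto
qed

lemma wi_rev: "wi Z g (rev w) = - wi Z g w"
proof (induction Z g w rule: wi.induct)
  case (3 Z g a b r)
  have "wi Z g (rev (a # b # r)) = wi Z g (rev r @ b # [a])" by simp
  also have "\<dots> = wi Z g (rev r @ [b]) + wi Z g [b, a]" by (rule wi_split)
  also have "\<dots> = - wi Z g (b # r) + wi Z g [b, a]" using 3 by simp
  also have "\<dots> = - wi Z g (a # b # r)" by (simp add: field_simps)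
  finally show ?case .
qed auto

lemma wi_backtrack: "wi Z g (xs @ u # v # u # ys) = wi Z g (xs @ u # ys)"
proof -
  have "wi Z g (xs @ u # v # u # ys) = wi Z g (xs @ [u]) + wi Z g (u # v # u # ys)"
    by (rule wi_split)
  also have "\<dots> = wi Z g (xs @ [u]) + wi Z g (u # ys)"
    by (simp add: field_simps)
  also have "\<dots> = wi Z g (xs @ u # ys)" by (rule wi_split[symmetric])
  finally show ?thesis .
qed

lemma wi_loop:
  assumes "c \<noteq> []" "last c = hd c"
  shows "wi Z g (xs @ c @ ys) = wi Z g (xs @ hd c # ys) + wi Z g c"
proof -
  have c1: "c = butlast c @ [hd c]" using assms by (metis append_butlast_last_id)
  have c2: "c = hd c # tl c" using assms by simp
  have "wi Z g (xs @ c @ ys) = wi Z g ((xs @ butlast c) @ hd c # ys)"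
    by (subst c1) simp
  also have "\<dots> = wi Z g ((xs @ butlast c) @ [hd c]) + wi Z g (hd c # ys)"
    by (rule wi_split)
  also have "(xs @ butlast c) @ [hd c] = xs @ hd c # tl c"
    using c1 c2 by (metis append.assoc)
  also have "wi Z g (xs @ hd c # tl c) = wi Z g (xs @ [hd c]) + wi Z g c"
    by (subst wi_split) (simp add: c2[symmetric])
  finally show ?thesis using wi_split[of Z g xs "hd c" ys] by simp
qed

lemma face_identity:
  assumes crit: "critical_region B F Z \<delta>" and hol: "discrete_holomorphic F Z f"
    and ph: "(x, y, x', y') \<in> F"
  shows "(dagger B f y' - dagger B f y) * (Z x' - Z x) =
         (dagger B f x' - dagger B f x) * (Z y' - Z y)"
proof -
  from crit ph have B: "x \<in> B" "x' \<in> B" "y \<notin> B" "y' \<notin> B" and ne: "Z x' \<noteq> Z x"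
    and "\<exists>t>0. Z y' - Z y = \<i> * complex_of_real t * (Z x' - Z x)"
    unfolding critical_region_def by fastforce+
  then obtain t where t: "t > 0" "Z y' - Z y = \<i> * complex_of_real t * (Z x' - Z x)"
    by blast
  have rho: "face_rho Z (x, y, x', y') = t"
    unfolding face_rho_def using t ne by (simp add: norm_mult)
  from hol ph have h: "f y' - f y = \<i> * complex_of_real t * (f x' - f x)"
    unfolding discrete_holomorphic_def using rho by fastforce
  have "dagger B f y' - dagger B f y = - cnj (f y' - f y)"
    using B by (simp add: dagger_def eps_def)
  also have "\<dots> = \<i> * complex_of_real t * (dagger B f x' - dagger B f x)"
  proof -
    have "- cnj (f y' - f y) = - cnj (\<i> * complex_of_real t * (f x' - f x))" using h by simp
    also have "\<dots> = \<i> * complex_of_real t * (cnj (f x') - cnj (f x))" by simp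
    finally show ?thesis using B by (simp add: dagger_def eps_def)
  qed
  finally have eq: "dagger B f y' - dagger B f y = \<i> * complex_of_real t * (dagger B f x' - dagger B f x)" .
  show ?thesis by (subst eq, subst t(2)) (simp add: mult_ac)
qed

lemma face_loop_zero:
  assumes crit: "critical_region B F Z \<delta>" and hol: "discrete_holomorphic F Z f"
    and c: "c \<in> face_loops F"
  shows "wi Z (dagger B f) c = 0 \<and> c \<noteq> [] \<and> last c = hd c"
proof -
  from c obtain x y x' y' k where ph: "(x, y, x', y') \<in> F" and k: "k < 4"
    and cc: "c = rotate k [x, y, x', y'] @ [hd (rotate k [x, y, x', y'])] \<or>
             c = rev (rotate k [x, y, x', y'] @ [hd (rotate k [x, y, x', y'])])"
    unfolding face_loops_def face_verts_def by (auto simp: Let_def)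
  note fi = face_identity[OF crit hol ph]
  define g where "g = dagger B f"
  have fi': "(g y' - g y) * (Z x' - Z x) = (g x' - g x) * (Z y' - Z y)"
    using fi g_def by simp
  have base: "wi Z g (rotate k [x, y, x', y'] @ [hd (rotate k [x, y, x', y'])]) = 0"
  proof -
    define Q where "Q = ((g x' - g x) * (Z y' - Z y) - (g y' - g y) * (Z x' - Z x)) / 2"
    have Q0: "Q = 0" using fi' Q_def by simp
    have "k = 0 \<or> k = 1 \<or> k = 2 \<or> k = 3" using k by auto
    then have "wi Z g (rotate k [x, y, x', y'] @ [hd (rotate k [x, y, x', y'])]) = Q"
      unfolding Q_def by (elim disjE) (simp_all add: rotate_def numeral_eq_Suc field_simps; algebra)+
    then show ?thesis using Q0 by simp
  qed
  define r where "r = rotate k [x, y, x', y'] @ [hd (rotate k [x, y, x', y'])]"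
  have r: "r \<noteq> []" "last r = hd r" unfolding r_def
    by simp (cases "rotate k [x, y, x', y']"; simp)
  have "wi Z g (rev r) = 0" using base wi_rev[of Z g r] r_def by simp
  then show ?thesis using cc base r g_def unfolding r_def[symmetric]
    by (elim disjE) (auto simp: last_rev hd_rev)
qed

lemma move_wi:
  assumes crit: "critical_region B F Z \<delta>" and hol: "discrete_holomorphic F Z f"
    and m: "walk_move E (face_loops F) a b"
  shows "wi Z (dagger B f) a = wi Z (dagger B f) b"
  using m
proof cases
  case (backtrack u v xs ys)
  then show ?thesis by (simp add: wi_backtrack)
next
  case (face_loop c xs ys)
  then show ?thesis using face_loop_zero[OF crit hol, of c] wi_loop[of c Z "dagger B f" xs ys]
    by simp
qed

lemma homotopic_wi:
  assumes crit: "critical_region B F Z \<delta>" and hol: "discrete_holomorphic F Z f"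
    and h: "walk_homotopic F a b"
  shows "wi Z (dagger B f) a = wi Z (dagger B f) b"
  using h unfolding walk_homotopic_def
proof (induction rule: rtranclp_induct)
  case (step y z)
  then show ?case using move_wi[OF crit hol] by metis
qed simp

fun wk :: "('v \<times> 'v) set \<Rightarrow> 'v list \<Rightarrow> bool" where
  "wk E [] = False"
| "wk E [a] = True"
| "wk E (a # b # r) = ((a, b) \<in> E \<and> wk E (b # r))"

lemma is_walk_wk: "is_walk E w = wk E w"
proof (induction E w rule: wk.induct)
  case (3 E a b r)
  have "is_walk E (a # b # r) = ((a, b) \<in> E \<and> is_walk E (b # r))"
  proof -
    have l: "length (a # b # r) - 1 = Suc (length (b # r) - 1)" by simp
    show ?thesis unfolding is_walk_def l All_less_Suc2 by simp
  qed
  then show ?case using 3 by simp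
qed (auto simp: is_walk_def)

lemma wk_append: "wk E xs \<Longrightarrow> wk E ys \<Longrightarrow> (last xs, hd ys) \<in> E \<Longrightarrow> wk E (xs @ ys)"
proof (induction E xs rule: wk.induct)
  case (2 E a) then show ?case by (cases ys) auto
next
  case (3 E a b r) then show ?case by auto
qed auto

lemma wk_rev: "(\<And>u v. (u, v) \<in> E \<Longrightarrow> (v, u) \<in> E) \<Longrightarrow> wk E w \<Longrightarrow> wk E (rev w)"
proof (induction E w rule: wk.induct)
  case (3 E a b r)
  then show ?case using wk_append[of E "rev (b # r)" "[a]"] by (auto simp: last_rev)
qed auto

lemma wi_append: "xs \<noteq> [] \<Longrightarrow> ys \<noteq> [] \<Longrightarrow> wi Z g (xs @ ys) =
   wi Z g xs + (g (last xs) + g (hd ys)) / 2 * (Z (hd ys) - Z (last xs)) + wi Z g ys"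
proof (induction Z g xs rule: wi.induct)
  case (2 Z g a) then show ?case by (cases ys) auto
next
  case (3 Z g a b r) then show ?case by auto
qed auto

lemma edges_sym: "(u, v) \<in> diamond_edges F \<Longrightarrow> (v, u) \<in> diamond_edges F"
  unfolding diamond_edges_def by (auto simp: insert_commute)

lemma edge_props:
  assumes crit: "critical_region B F Z \<delta>" and e: "(u, v) \<in> diamond_edges F"
  shows "cmod (Z v - Z u) = \<delta> \<and> ((u \<in> B \<and> v \<notin> B) \<or> (u \<notin> B \<and> v \<in> B))"
proof -
  from e obtain x y x' y' where ph: "(x, y, x', y') \<in> F" and
    d: "{u, v} = {x, y} \<or> {u, v} = {y, x'} \<or> {u, v} = {x', y'} \<or> {u, v} = {y', x}"
    unfolding diamond_edges_def by auto
  from crit ph have P: "x \<in> B \<and> x' \<in> B \<and> y \<notin> B \<and> y' \<notin> B \<and>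
        cmod (Z y - Z x) = \<delta> \<and> cmod (Z x' - Z y) = \<delta> \<and>
        cmod (Z y' - Z x') = \<delta> \<and> cmod (Z x - Z y') = \<delta>"
    unfolding critical_region_def by fastforce
  have ns: "\<And>a b. cmod (Z a - Z b) = cmod (Z b - Z a)" by (simp add: norm_minus_commute)
  from d P ns show ?thesis by (auto simp: doubleton_eq_iff)
qed

lemma vert_edge: "(u, v) \<in> diamond_edges F \<Longrightarrow> u \<in> diamond_vertices F \<and> v \<in> diamond_vertices F"
  unfolding diamond_edges_def diamond_vertices_def face_verts_def
  by (auto simp: doubleton_eq_iff) (metis (mono_tags, lifting) list.set_intros case_prod_conv)+

theorem mainTheorem13:
  fixes B :: "'v set" and F :: "'v face set" and Z f :: "'v \<Rightarrow> complex"
    and \<delta> :: real and z0 :: 'v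
  assumes "critical_region B F Z \<delta>"
    and "simply_connected_region F"
    and "z0 \<in> diamond_vertices F"
    and "discrete_holomorphic F Z f"
  shows "\<forall>(x, y) \<in> diamond_edges F.
           f y - f x = (dderiv B F Z \<delta> z0 f x + dderiv B F Z \<delta> z0 f y) / 2 * (Z y - Z x)"
proof (intro ballI, clarify)
  fix a b assume e: "(a, b) \<in> diamond_edges F"
  let ?E = "diamond_edges F"
  let ?g = "dagger B f"
  define W where "W = (\<lambda>z'. SOME w. is_walk ?E w \<and> hd w = z0 \<and> last w = z')"
  have W: "is_walk ?E (W v) \<and> hd (W v) = z0 \<and> last (W v) = v" if "v \<in> diamond_vertices F" for v
  proof -
    from assms(2,3) that obtain w where "is_walk ?E w \<and> hd w = z0 \<and> last w = v"
      unfolding simply_connected_region_def by blast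
    then show ?thesis unfolding W_def by (rule someI)
  qed
  define G where "G = (\<lambda>z. wi Z ?g (W z))"
  have D: "dderiv B F Z \<delta> z0 f z = complex_of_real (4 / \<delta>\<^sup>2) * (eps B z * cnj (G z))" for z
    unfolding dderiv_def dagger_def G_def W_def wi_eq by simp
  from vert_edge[OF e] have Wa: "is_walk ?E (W a) \<and> hd (W a) = z0 \<and> last (W a) = a"
    and Wb: "is_walk ?E (W b) \<and> hd (W b) = z0 \<and> last (W b) = b" using W by auto
  define c where "c = W a @ rev (W b)"
  have na: "W a \<noteq> []" and nb: "W b \<noteq> []" using Wa Wb by (auto simp: is_walk_def)
  have wc: "is_walk ?E c"
    unfolding c_def is_walk_wk
    using Wa Wb na nb e edges_sym
    by (intro wk_append wk_rev) (auto simp: is_walk_wk hd_rev)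
  have hc: "hd c = last c" unfolding c_def using Wa Wb na nb by (simp add: last_rev)
  have "walk_homotopic F c [hd c]" using assms(2) wc hc
    unfolding simply_connected_region_def by blast
  then have "wi Z ?g c = 0" using homotopic_wi[OF assms(1) assms(4)] by fastforce
  moreover have "wi Z ?g c = G a + (?g a + ?g b) / 2 * (Z b - Z a) - G b"
    unfolding c_def G_def using wi_append[OF na, of "rev (W b)" Z ?g] nb Wa Wb wi_rev
    by (simp add: hd_rev)
  ultimately have GG: "G b - G a = (?g a + ?g b) / 2 * (Z b - Z a)"
  proof -
    fix X :: complex
    have "\<And>X. 0 = G a + X - G b \<Longrightarrow> G b - G a = X" by (simp add: algebra_simps)
    then show ?thesis using \<open>wi Z ?g c = 0\<close> \<open>wi Z ?g c = G a + (?g a + ?g b) / 2 * (Z b - Z a) - G b\<close>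
      by metis
  qed
  from edge_props[OF assms(1) e] have nd: "cmod (Z b - Z a) = \<delta>"
    and Bab: "(a \<in> B \<and> b \<notin> B) \<or> (a \<notin> B \<and> b \<in> B)" by auto
  have dpos: "\<delta> > 0" using assms(1) unfolding critical_region_def by simp
  have sq: "(Z b - Z a) * cnj (Z b - Z a) = complex_of_real (\<delta>\<^sup>2)"
    using nd by (metis complex_norm_square)
  have cG: "cnj (G b) - cnj (G a) = cnj ((?g a + ?g b) / 2) * cnj (Z b - Z a)"
    using arg_cong[OF GG, of cnj] by simp
  show "f b - f a = (dderiv B F Z \<delta> z0 f a + dderiv B F Z \<delta> z0 f b) / 2 * (Z b - Z a)"
    using Bab
  proof
    assume ab: "a \<in> B \<and> b \<notin> B"
    have "(dderiv B F Z \<delta> z0 f a + dderiv B F Z \<delta> z0 f b) / 2 * (Z b - Z a)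
       = - complex_of_real (2 / \<delta>\<^sup>2) * (cnj (G b) - cnj (G a)) * (Z b - Z a)"
      using ab dpos by (simp add: D eps_def field_simps)
    also have "\<dots> = - complex_of_real (2 / \<delta>\<^sup>2) * ((f a - f b) / 2) * ((Z b - Z a) * cnj (Z b - Z a))"
      using ab by (simp add: cG dagger_def eps_def field_simps)
    also have "\<dots> = f b - f a" unfolding sq using dpos by (simp add: field_simps)
    finally show ?thesis by simp
  next
    assume ab: "a \<notin> B \<and> b \<in> B"
    have "(dderiv B F Z \<delta> z0 f a + dderiv B F Z \<delta> z0 f b) / 2 * (Z b - Z a)
       = complex_of_real (2 / \<delta>\<^sup>2) * (cnj (G b) - cnj (G a)) * (Z b - Z a)"
      using ab dpos by (simp add: D eps_def field_simps)
    also have "\<dots> = complex_of_real (2 / \<delta>\<^sup>2) * ((f b - f a) / 2) * ((Z b - Z a) * cnj (Z b - Z a))"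
      using ab by (simp add: cG dagger_def eps_def field_simps)
    also have "\<dots> = f b - f a" unfolding sq using dpos by (simp add: field_simps)
    finally show ?thesis by simp
  qed
qed

end
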